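(* Let $n\ge1$, $q\ge2$ be integers and $\mu>0$. Let $\mathbf u_1,\dots,\mathbf u_{q-2},\tilde{\mathbf r},\tilde{\mathbf s}\in\mathbb R^n$ and set $\mathbf u_q=(W_{11}\tilde{\mathbf r}+W_{12}\tilde{\mathbf s})/\sqrt{m_2}$, $\mathbf u_{q-1}=(W_{21}\tilde{\mathbf r}+W_{22}\tilde{\mathbf s})/\sqrt{m_1}$, with $W$ as in the context. Let $\mathbf w_l=\sum_{m=1}^{q-2}\alpha_{m,l}\mathbf u_m$ for $l=1,\dots,q$. Then the quantities $G_l$ and $T$ defined in the context satisfy $$G_l=\mathbf w_l\cdot\mathbf w_l+2\sqrt{\frac1\mu+\frac{q}{q-1}}\;\mathbf w_l\cdot\tilde{\mathbf r},$$ $$T=\frac12\Big(1+\mu\frac{q}{q-1}\Big)^{-1}\Big[-\frac{q}{q-1}\Big(2+\mu\frac{q}{q-1}\Big)\tilde{\mathbf r}\cdot\tilde{\mathbf r}+\frac{q}{q-1}\tilde{\mathbf s}\cdot\tilde{\mathbf s}+\frac{2}{\sqrt\mu}\sqrt{\frac{q}{q-1}}\;\tilde{\mathbf r}\cdot\tilde{\mathbf s}\Big].$$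
   Context: For $j\in\{1,2\}$: $\lambda_j=\frac12\big((\mu-1)+(-1)^{j+1}\sqrt{\mu^2-(4q^{-1}-2)\mu+1}\big)$, $m_j=\lambda_j+1$, $x_j=1-qm_j$, $N_j=q-1+x_j^2$. For $m=1,\dots,q-2$, $l=1,\dots,q$: $\alpha_{m,l}=\frac{1}{\sqrt{m(m+1)}}$ if $l\le m$, $\frac{-m}{\sqrt{m(m+1)}}$ if $l=m+1$, $0$ if $l>m+1$. $$W=\frac{1}{\sqrt{\frac1\mu+\frac{q}{q-1}}}\begin{pmatrix}\frac{1/\sqrt{m_2}}{\sqrt{N_2}}&\frac{1/\sqrt{m_1}}{\sqrt{N_1}}\\[2pt]\frac{1/\sqrt{m_1}}{\sqrt{N_1}}&-\frac{1/\sqrt{m_2}}{\sqrt{N_2}}\end{pmatrix}.$$ $$G_l=\sum_{m,m'=1}^{q-2}\alpha_{m,l}\alpha_{m',l}\mathbf u_m\cdot\mathbf u_{m'}+\frac{2}{\sqrt{N_1}}\sum_{m=1}^{q-2}\alpha_{m,l}\mathbf u_m\cdot\mathbf u_{q-1}+\frac{2}{\sqrt{N_2}}\sum_{m=1}^{q-2}\alpha_{m,l}\mathbf u_m\cdot\mathbf u_q,$$ $$T=\frac{x_2^2-1}{2N_2}\mathbf u_q\cdot\mathbf u_q+\frac{x_1^2-1}{2N_1}\mathbf u_{q-1}\cdot\mathbf u_{q-1}+\frac{x_1x_2-1}{\sqrt{N_1}\sqrt{N_2}}\mathbf u_q\cdot\mathbf u_{q-1}.$$ *)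

theory Defs
  imports "HOL-Analysis.Analysis"
begin

definition lam :: "nat \<Rightarrow> real \<Rightarrow> nat \<Rightarrow> real" where
  "lam q \<mu> j = (1/2) * ((\<mu> - 1) + (-1) ^ (j + 1) *
      sqrt (\<mu>^2 - (4 / real q - 2) * \<mu> + 1))"

definition mm :: "nat \<Rightarrow> real \<Rightarrow> nat \<Rightarrow> real" where
  "mm q \<mu> j = lam q \<mu> j + 1"

definition xx :: "nat \<Rightarrow> real \<Rightarrow> nat \<Rightarrow> real" where
  "xx q \<mu> j = 1 - real q * mm q \<mu> j"

definition NN :: "nat \<Rightarrow> real \<Rightarrow> nat \<Rightarrow> real" where
  "NN q \<mu> j = real q - 1 + (xx q \<mu> j)^2"

definition alpha :: "nat \<Rightarrow> nat \<Rightarrow> real" where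
  "alpha m l = (if l \<le> m then 1 / sqrt (real m * (real m + 1))
               else if l = m + 1 then - real m / sqrt (real m * (real m + 1))
               else 0)"

definition cW :: "nat \<Rightarrow> real \<Rightarrow> real" where
  "cW q \<mu> = 1 / sqrt (1/\<mu> + real q / (real q - 1))"

definition W11 :: "nat \<Rightarrow> real \<Rightarrow> real" where
  "W11 q \<mu> = cW q \<mu> * ((1 / sqrt (mm q \<mu> 2)) / sqrt (NN q \<mu> 2))"
definition W12 :: "nat \<Rightarrow> real \<Rightarrow> real" where
  "W12 q \<mu> = cW q \<mu> * ((1 / sqrt (mm q \<mu> 1)) / sqrt (NN q \<mu> 1))"
definition W21 :: "nat \<Rightarrow> real \<Rightarrow> real" where
  "W21 q \<mu> = cW q \<mu> * ((1 / sqrt (mm q \<mu> 1)) / sqrt (NN q \<mu> 1))"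
definition W22 :: "nat \<Rightarrow> real \<Rightarrow> real" where
  "W22 q \<mu> = cW q \<mu> * (- (1 / sqrt (mm q \<mu> 2)) / sqrt (NN q \<mu> 2))"

definition GG :: "nat \<Rightarrow> real \<Rightarrow> (nat \<Rightarrow> real ^ 'n) \<Rightarrow> nat \<Rightarrow> real" where
  "GG q \<mu> u l =
     (\<Sum>m = 1..q-2. \<Sum>m' = 1..q-2. alpha m l * alpha m' l * (u m \<bullet> u m'))
     + 2 / sqrt (NN q \<mu> 1) * (\<Sum>m = 1..q-2. alpha m l * (u m \<bullet> u (q-1)))
     + 2 / sqrt (NN q \<mu> 2) * (\<Sum>m = 1..q-2. alpha m l * (u m \<bullet> u q))"

definition TT :: "nat \<Rightarrow> real \<Rightarrow> (nat \<Rightarrow> real ^ 'n) \<Rightarrow> real" where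
  "TT q \<mu> u =
     ((xx q \<mu> 2)^2 - 1) / (2 * NN q \<mu> 2) * (u q \<bullet> u q)
     + ((xx q \<mu> 1)^2 - 1) / (2 * NN q \<mu> 1) * (u (q-1) \<bullet> u (q-1))
     + (xx q \<mu> 1 * xx q \<mu> 2 - 1) / (sqrt (NN q \<mu> 1) * sqrt (NN q \<mu> 2)) * (u q \<bullet> u (q-1))"

end

theory Submission
  imports Defs
begin

lemma alg_ids:
  fixes x1 x2 Q m1 m2 N1 N2 \<mu> k :: real
  assumes "x1 < 0" "0 < x2" "x2 < 1" and Q: "Q = 1 - x1*x2"
    and m1: "m1 = (1-x1)/Q" and m2: "m2 = (1-x2)/Q" and N1: "N1 = Q-1+x1^2" and N2: "N2 = Q-1+x2^2"
    and mu: "\<mu> = (1-x1)*(1-x2)/Q" and k: "k = Q/(Q-1)"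
  shows "1/(m1*N1)+1/(m2*N2) = 1/\<mu> + k"
    and "(x2^2-1)/(2*N2)/(m2^2*N2) + (x1^2-1)/(2*N1)/(m1^2*N1) + (x1*x2-1)/(m1*m2*N1*N2) = -k*(2+\<mu>*k)/(2*\<mu>)"
    and "(x2^2-1)/(2*N2)/(m1*m2*N1) + (x1^2-1)/(2*N1)/(m1*m2*N2) - (x1*x2-1)/(m1*m2*N1*N2) = k/(2*\<mu>)"
    and "2*((x2^2-1)/(2*N2))/m2 - 2*((x1^2-1)/(2*N1))/m1 + (x1*x2-1)*(1/(m1*N1)-1/(m2*N2)) = 1/m2 - 1/m1"
proof -
  have n1: "N1 = x1*(x1-x2)" using assms by (simp add: power2_eq_square algebra_simps)
  have n2: "N2 = x2*(x2-x1)" using assms by (simp add: power2_eq_square algebra_simps)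
  have q1: "Q - 1 = -x1*x2" using assms by simp
  have p: "x1*x2 < 0" using assms by (simp add: mult_neg_pos)
  have Qnz: "Q \<noteq> 0" using Q p by auto
  have nz3: "x1 \<noteq> 0" "x2 \<noteq> 0" "x1 - x2 \<noteq> 0" "m1 \<noteq> 0" "m2 \<noteq> 0" "Q \<noteq> 0"
    using assms p Qnz by auto
  have mq: "\<mu> = Q*m1*m2" unfolding mu m1 m2 using Qnz by (simp add: field_simps)
  have k2: "k = Q/(-x1*x2)" using k q1 by simp
  have xq: "x1 = 1 - Q*m1" "x2 = 1 - Q*m2" using m1 m2 Qnz by (auto simp: field_simps)
  obtain d where d: "d = x1 - x2" by blast
  have n1d: "N1 = x1*d" and n2d: "N2 = -(x2*d)" using n1 n2 d by (auto simp: algebra_simps)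
  have dnz: "d \<noteq> 0" using nz3 d by auto
  have "1/(m1*N1)+1/(m2*N2) = 1/(m1*(x1*d)) + 1/(m2*(-(x2*d)))" using n1d n2d by simp
  also have "\<dots> = 1/(Q*m1*m2) + Q/(-x1*x2)" using nz3 dnz apply (simp add: field_simps)
    unfolding d xq by (simp add: algebra_simps power2_eq_square)
  finally show Y1: "1/(m1*N1)+1/(m2*N2) = 1/\<mu> + k" unfolding mq k2 .
  have N12: "N1 \<noteq> 0" "N2 \<noteq> 0" using n1d n2d nz3 dnz by auto
  have dQ: "d = Q*(m2-m1)" using d xq by (simp add: algebra_simps)
  have m12: "m2 - m1 \<noteq> 0" using dQ dnz by auto
  have Y: "x1/(m1*N1) + x2/(m2*N2) = 1/\<mu>"
  proof -
    have "x1/(m1*N1) + x2/(m2*N2) = (m2-m1)/(m1*m2*d)" unfolding n1d n2d using nz3 dnz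
      by (simp add: field_simps)
    also have "\<dots> = 1/\<mu>" unfolding mq dQ using nz3 m12 by (simp add: field_simps)
    finally show ?thesis .
  qed
  have "(x2^2-1)/(2*N2)/(m2^2*N2) + (x1^2-1)/(2*N1)/(m1^2*N1) + (x1*x2-1)/(m1*m2*N1*N2)
     = ((x1/(m1*N1) + x2/(m2*N2))^2 - (1/(m1*N1)+1/(m2*N2))^2)/2"
  proof -
    obtain y1 y2 where y1: "y1 = 1/(m1*N1)" and y2: "y2 = 1/(m2*N2)" by blast
    have t1: "(x2^2-1)/(2*N2)/(m2^2*N2) = (x2^2-1)*y2^2/2" unfolding y2 using nz3 N12
      by (simp add: power2_eq_square)
    have t2: "(x1^2-1)/(2*N1)/(m1^2*N1) = (x1^2-1)*y1^2/2" unfolding y1 using nz3 N12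
      by (simp add: power2_eq_square)
    have t3: "(x1*x2-1)/(m1*m2*N1*N2) = (x1*x2-1)*y1*y2" unfolding y1 y2 by simp
    have t4: "x1/(m1*N1) = x1*y1" "x2/(m2*N2) = x2*y2" unfolding y1 y2 by simp_all
    show ?thesis unfolding t1 t2 t3 t4 y1[symmetric] y2[symmetric]
      by (simp add: field_simps power2_eq_square)
  qed
  also have "\<dots> = -k*(2+\<mu>*k)/(2*\<mu>)" unfolding Y Y1 using mq nz3
    by (simp add: field_simps power2_eq_square)
  finally show "(x2^2-1)/(2*N2)/(m2^2*N2) + (x1^2-1)/(2*N1)/(m1^2*N1) + (x1*x2-1)/(m1*m2*N1*N2) = -k*(2+\<mu>*k)/(2*\<mu>)" .
  have "(x2^2-1)/(2*N2)/(m1*m2*N1) + (x1^2-1)/(2*N1)/(m1*m2*N2) - (x1*x2-1)/(m1*m2*N1*N2)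
      = (x1-x2)^2/(2*m1*m2*N1*N2)" using n1d n2d nz3 dnz by (simp add: field_simps) (simp add: algebra_simps power2_eq_square)
  also have "\<dots> = 1/(2*m1*m2*(-x1*x2))" unfolding n1d n2d d[symmetric] using nz3 dnz
    by (simp add: field_simps power2_eq_square)
  also have "\<dots> = k/(2*\<mu>)" unfolding mq k2 using nz3 by (simp add: field_simps)
  finally show "(x2^2-1)/(2*N2)/(m1*m2*N1) + (x1^2-1)/(2*N1)/(m1*m2*N2) - (x1*x2-1)/(m1*m2*N1*N2) = k/(2*\<mu>)" .
  show "2*((x2^2-1)/(2*N2))/m2 - 2*((x1^2-1)/(2*N1))/m1 + (x1*x2-1)*(1/(m1*N1)-1/(m2*N2)) = 1/m2 - 1/m1"
    unfolding n1d n2d using nz3 dnz by (simp add: field_simps) (simp add: d algebra_simps power2_eq_square)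
qed

theorem corollary3:
  fixes q :: nat and \<mu> :: real
    and u :: "nat \<Rightarrow> real ^ 'n" and r s :: "real ^ 'n"
  assumes hq: "q \<ge> 2" and hmu: "\<mu> > 0"
    and huq: "u q = (1 / sqrt (mm q \<mu> 2)) *\<^sub>R (W11 q \<mu> *\<^sub>R r + W12 q \<mu> *\<^sub>R s)"
    and huq1: "u (q-1) = (1 / sqrt (mm q \<mu> 1)) *\<^sub>R (W21 q \<mu> *\<^sub>R r + W22 q \<mu> *\<^sub>R s)"
  defines "w \<equiv> (\<lambda>l. \<Sum>m = 1..q-2. alpha m l *\<^sub>R u m)"
  shows "(\<forall>l \<in> {1..q}. GG q \<mu> u l =
            w l \<bullet> w l + 2 * sqrt (1/\<mu> + real q / (real q - 1)) * (w l \<bullet> r))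
       \<and> TT q \<mu> u =
           (1/2) * inverse (1 + \<mu> * (real q / (real q - 1))) *
           (- (real q / (real q - 1)) * (2 + \<mu> * (real q / (real q - 1))) * (r \<bullet> r)
            + (real q / (real q - 1)) * (s \<bullet> s)
            + 2 / sqrt \<mu> * sqrt (real q / (real q - 1)) * (r \<bullet> s))"
proof -
  define Q where "Q = real q"
  define D where "D = \<mu>^2 - (4 / real q - 2) * \<mu> + 1"
  define sD where "sD = sqrt D"
  define m1 where "m1 = mm q \<mu> 1"
  define m2 where "m2 = mm q \<mu> 2"
  define x1 where "x1 = xx q \<mu> 1"
  define x2 where "x2 = xx q \<mu> 2"
  define N1 where "N1 = NN q \<mu> 1"
  define N2 where "N2 = NN q \<mu> 2"
  define k where "k = real q / (real q - 1)"
  have Q2: "Q \<ge> 2" using hq unfolding Q_def by simp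
  have m1e: "m1 = (\<mu> + 1 + sD)/2" unfolding m1_def mm_def lam_def sD_def D_def by (simp add: field_simps)
  have m2e: "m2 = (\<mu> + 1 - sD)/2" unfolding m2_def mm_def lam_def sD_def D_def by (simp add: field_simps)
  have x1e: "x1 = 1 - Q*m1" unfolding x1_def xx_def m1_def Q_def by simp
  have x2e: "x2 = 1 - Q*m2" unfolding x2_def xx_def m2_def Q_def by simp
  have N1e: "N1 = Q - 1 + x1^2" unfolding N1_def NN_def x1_def Q_def by simp
  have N2e: "N2 = Q - 1 + x2^2" unfolding N2_def NN_def x2_def Q_def by simp
  have ke: "k = Q/(Q-1)" unfolding k_def Q_def by simp
  have Dalt: "D = (\<mu>-1)^2 + 4*\<mu>*(1 - 1/Q)" unfolding D_def Q_def by (simp add: field_simps power2_eq_square)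
  have Dalt2: "(\<mu>+1)^2 - D = 4*\<mu>/Q" unfolding D_def Q_def by (simp add: field_simps power2_eq_square)
  have "1/Q \<le> 1/2" using Q2 by (simp add: field_simps)
  hence "1 - 1/Q > 0" by simp
  hence Dpos: "D > 0" unfolding Dalt using hmu by (simp add: add_nonneg_pos)
  have sDsq: "sD^2 = D" unfolding sD_def using Dpos by simp
  have sDpos: "sD > 0" unfolding sD_def using Dpos by simp
  have "4*\<mu>/Q > 0" using hmu Q2 by simp
  hence DL: "D < (\<mu>+1)^2" using Dalt2 by linarith
  have sDL: "sD < \<mu> + 1"
  proof (rule ccontr)
    assume "\<not> sD < \<mu> + 1"
    hence "(\<mu>+1)^2 \<le> sD^2" using hmu by (intro power_mono) auto
    thus False using DL sDsq by simp
  qed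
  have m2pos: "m2 > 0" using m2e sDL by simp
  have m1pos: "m1 > 0" using m1e sDpos hmu by simp
  have msum: "m1 + m2 = \<mu> + 1" using m1e m2e by simp
  have mprod: "m1 * m2 = \<mu>/Q"
  proof -
    have "m1*m2 = ((\<mu>+1)^2 - sD^2)/4" unfolding m1e m2e by (simp add: field_simps power2_eq_square)
    also have "\<dots> = \<mu>/Q" using sDsq Dalt2 by simp
    finally show ?thesis .
  qed
  have Qnz: "Q \<noteq> 0" using Q2 by simp
  have muQ: "\<mu> = Q*m1*m2" using mprod Qnz by (simp add: field_simps)
  have x12: "x1*x2 = 1 - Q"
  proof -
    have "x1*x2 = 1 - Q*(m1+m2) + Q*(Q*m1*m2)" unfolding x1e x2e by (simp add: algebra_simps)
    also have "\<dots> = 1 - Q" unfolding msum muQ[symmetric] by (simp add: algebra_simps)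
    finally show ?thesis .
  qed
  have xd: "x1 - x2 = - Q* sD" unfolding x1e x2e m1e m2e by (simp add: field_simps)
  have xneg: "x1*x2 < 0" using x12 Q2 by simp
  have "Q * sD > 0" using Q2 sDpos by simp
  hence xlt: "x1 < x2" using xd by linarith
  have x1neg: "x1 < 0" and x2pos: "x2 > 0"
    using xneg xlt by (auto simp: mult_less_0_iff)
  have x2lt: "x2 < 1" using x2e m2pos Q2 by simp
  have Qx: "Q = 1 - x1*x2" using x12 by simp
  have m1x: "m1 = (1-x1)/Q" using x1e Qnz by (simp add: field_simps)
  have m2x: "m2 = (1-x2)/Q" using x2e Qnz by (simp add: field_simps)
  have mux: "\<mu> = (1-x1)*(1-x2)/Q" unfolding x1e x2e muQ using Qnz by (simp add: field_simps)
  note A = alg_ids[OF x1neg x2pos x2lt Qx m1x m2x N1e N2e mux ke]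
  have N1x: "N1 = x1*(x1-x2)" using N1e Qx by (simp add: power2_eq_square algebra_simps)
  have N2x: "N2 = x2*(x2-x1)" using N2e Qx by (simp add: power2_eq_square algebra_simps)
  have N1pos: "N1 > 0" unfolding N1x using x1neg xlt by (simp add: mult_neg_neg)
  have N2pos: "N2 > 0" unfolding N2x using x2pos xlt by simp
  define a1 where "a1 = sqrt m1"
  define a2 where "a2 = sqrt m2"
  define b1 where "b1 = sqrt N1"
  define b2 where "b2 = sqrt N2"
  define \<sigma> where "\<sigma> = sqrt (1/\<mu> + real q / (real q - 1))"
  define c where "c = cW q \<mu>"
  define sk where "sk = sqrt (real q / (real q - 1))"
  define s\<mu> where "s\<mu> = sqrt \<mu>"
  have kpos: "k > 0" unfolding ke using Q2 by simp
  have a1p: "a1 > 0" and a2p: "a2 > 0" and b1p: "b1 > 0" and b2p: "b2 > 0"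
    unfolding a1_def a2_def b1_def b2_def using m1pos m2pos N1pos N2pos by auto
  have a1s: "a1^2 = m1" and a2s: "a2^2 = m2" and b1s: "b1^2 = N1" and b2s: "b2^2 = N2"
    unfolding a1_def a2_def b1_def b2_def using m1pos m2pos N1pos N2pos by auto
  have "1/\<mu> > 0" using hmu by simp
  hence sarg: "1/\<mu> + k > 0" using kpos by linarith
  have \<sigma>p: "\<sigma> > 0" unfolding \<sigma>_def k_def[symmetric] using sarg by simp
  have \<sigma>s: "\<sigma>^2 = 1/\<mu> + k" unfolding \<sigma>_def k_def[symmetric] using sarg by simp
  have ce: "c = 1/\<sigma>" unfolding c_def cW_def \<sigma>_def by simp
  have c2: "c^2 = \<mu>/(1+\<mu>*k)" unfolding ce power_one_over \<sigma>s using hmu kpos by (simp add: field_simps)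
  define \<alpha> where "\<alpha> = (1 / sqrt (mm q \<mu> 2)) * W11 q \<mu>"
  define \<beta> where "\<beta> = (1 / sqrt (mm q \<mu> 2)) * W12 q \<mu>"
  define \<gamma> where "\<gamma> = (1 / sqrt (mm q \<mu> 1)) * W21 q \<mu>"
  define \<delta> where "\<delta> = (1 / sqrt (mm q \<mu> 1)) * W22 q \<mu>"
  have uq: "u q = \<alpha> *\<^sub>R r + \<beta> *\<^sub>R s" unfolding huq \<alpha>_def \<beta>_def by (simp add: scaleR_add_right)
  have uq1: "u (q-1) = \<gamma> *\<^sub>R r + \<delta> *\<^sub>R s" unfolding huq1 \<gamma>_def \<delta>_def by (simp add: scaleR_add_right)
  have aa1: "a1*a1 = m1" and aa2: "a2*a2 = m2" using a1s a2s by (simp_all add: power2_eq_square)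
  have \<alpha>e: "\<alpha> = c/(m2*b2)" unfolding \<alpha>_def W11_def c_def[symmetric]
    unfolding m2_def[symmetric] N2_def[symmetric] a2_def[symmetric] b2_def[symmetric] aa2[symmetric] by simp
  have \<beta>e: "\<beta> = c/(a1*a2*b1)" unfolding \<beta>_def W12_def c_def[symmetric]
    unfolding m1_def[symmetric] m2_def[symmetric] N1_def[symmetric] a1_def[symmetric] a2_def[symmetric] b1_def[symmetric] by simp
  have \<gamma>e: "\<gamma> = c/(m1*b1)" unfolding \<gamma>_def W21_def c_def[symmetric]
    unfolding m1_def[symmetric] N1_def[symmetric] a1_def[symmetric] b1_def[symmetric] aa1[symmetric] by simp
  have \<delta>e: "\<delta> = -c/(a1*a2*b2)" unfolding \<delta>_def W22_def c_def[symmetric]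
    unfolding m1_def[symmetric] m2_def[symmetric] N2_def[symmetric] a1_def[symmetric] a2_def[symmetric] b2_def[symmetric] by simp
  have Gpart: "\<forall>l \<in> {1..q}. GG q \<mu> u l =
            w l \<bullet> w l + 2 * sqrt (1/\<mu> + real q / (real q - 1)) * (w l \<bullet> r)"
  proof
    fix l assume "l \<in> {1..q}"
    have wv: "\<And>v. (\<Sum>m = 1..q-2. alpha m l * (u m \<bullet> v)) = w l \<bullet> v"
      by (simp add: w_def inner_sum_left)
    have w1: "\<And>v. w l \<bullet> v = (\<Sum>m = 1..q-2. alpha m l * (u m \<bullet> v))" using wv by simp
    have w2: "\<And>v. v \<bullet> w l = (\<Sum>m = 1..q-2. alpha m l * (v \<bullet> u m))"
      by (simp add: w_def inner_sum_right)
    have ww: "(\<Sum>m = 1..q-2. \<Sum>m' = 1..q-2. alpha m l * alpha m' l * (u m \<bullet> u m')) = w l \<bullet> w l"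
    proof -
      have "w l \<bullet> w l = (\<Sum>m = 1..q-2. alpha m l * (u m \<bullet> w l))" by (rule w1)
      also have "\<dots> = (\<Sum>m = 1..q-2. alpha m l * (\<Sum>m' = 1..q-2. alpha m' l * (u m \<bullet> u m')))"
        by (simp only: w2)
      finally show ?thesis by (simp add: sum_distrib_left mult.assoc)
    qed
    have "GG q \<mu> u l = w l \<bullet> w l + 2/b1 * (w l \<bullet> u (q-1)) + 2/b2 * (w l \<bullet> u q)"
      unfolding GG_def ww wv N1_def[symmetric] N2_def[symmetric] b1_def[symmetric] b2_def[symmetric] ..
    also have "\<dots> = w l \<bullet> w l + (2/b1*\<gamma> + 2/b2*\<alpha>) * (w l \<bullet> r) + (2/b1*\<delta> + 2/b2*\<beta>) * (w l \<bullet> s)"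
      unfolding uq uq1 by (simp add: inner_add_right algebra_simps)
    also have "2/b1*\<delta> + 2/b2*\<beta> = 0" unfolding \<delta>e \<beta>e using a1p a2p b1p b2p by (simp add: field_simps)
    also have "2/b1*\<gamma> + 2/b2*\<alpha> = 2*c*(1/(m1*N1) + 1/(m2*N2))"
      unfolding \<gamma>e \<alpha>e b1s[symmetric] b2s[symmetric] using b1p b2p m1pos m2pos
      by (simp add: field_simps power2_eq_square)
    also have "\<dots> = 2*\<sigma>" unfolding A(1) \<sigma>s[symmetric] ce using \<sigma>p by (simp add: power2_eq_square)
    finally show "GG q \<mu> u l = w l \<bullet> w l + 2 * sqrt (1/\<mu> + real q / (real q - 1)) * (w l \<bullet> r)"
      unfolding \<sigma>_def by simp
  qed
  define K1 where "K1 = (x1^2-1)/(2*N1)"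
  define K2 where "K2 = (x2^2-1)/(2*N2)"
  define K12 where "K12 = (x1*x2-1)/(b1*b2)"
  have T0: "TT q \<mu> u = K2*(u q \<bullet> u q) + K1*(u (q-1) \<bullet> u (q-1)) + K12*(u q \<bullet> u (q-1))"
    unfolding TT_def x1_def[symmetric] x2_def[symmetric] N1_def[symmetric] N2_def[symmetric]
      b1_def[symmetric] b2_def[symmetric] K1_def K2_def K12_def by simp
  have e1: "u q \<bullet> u q = \<alpha>^2*(r \<bullet> r) + 2*\<alpha>*\<beta>*(r \<bullet> s) + \<beta>^2*(s \<bullet> s)"
    unfolding uq by (simp add: inner_add_left inner_add_right inner_commute[of s r] power2_eq_square algebra_simps)
  have e2: "u (q-1) \<bullet> u (q-1) = \<gamma>^2*(r \<bullet> r) + 2*\<gamma>*\<delta>*(r \<bullet> s) + \<delta>^2*(s \<bullet> s)"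
    unfolding uq1 by (simp add: inner_add_left inner_add_right inner_commute[of s r] power2_eq_square algebra_simps)
  have e3: "u q \<bullet> u (q-1) = \<alpha>*\<gamma>*(r \<bullet> r) + (\<alpha>*\<delta>+\<beta>*\<gamma>)*(r \<bullet> s) + \<beta>*\<delta>*(s \<bullet> s)"
    unfolding uq uq1 by (simp add: inner_add_left inner_add_right inner_commute[of s r] algebra_simps)
  define Crr where "Crr = K2*\<alpha>^2 + K1*\<gamma>^2 + K12*(\<alpha>*\<gamma>)"
  define Css where "Css = K2*\<beta>^2 + K1*\<delta>^2 + K12*(\<beta>*\<delta>)"
  define Crs where "Crs = K2*(2*\<alpha>*\<beta>) + K1*(2*\<gamma>*\<delta>) + K12*(\<alpha>*\<delta>+\<beta>*\<gamma>)"
  have T1: "TT q \<mu> u = Crr*(r \<bullet> r) + Css*(s \<bullet> s) + Crs*(r \<bullet> s)"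
    unfolding T0 e1 e2 e3 Crr_def Css_def Crs_def by (simp add: algebra_simps)
  have nzs: "a1 \<noteq> 0" "a2 \<noteq> 0" "b1 \<noteq> 0" "b2 \<noteq> 0" "m1 \<noteq> 0" "m2 \<noteq> 0"
    using a1p a2p b1p b2p m1pos m2pos by auto
  have kk: "1 + \<mu>*k > 0" using hmu kpos by (simp add: add_pos_pos)
  obtain E where E: "E = 1 + \<mu>*k" by blast
  have Enz: "E \<noteq> 0" using kk E by simp
  have Crr_e: "Crr = c^2 * ((x2^2-1)/(2*N2)/(m2^2*N2) + (x1^2-1)/(2*N1)/(m1^2*N1) + (x1*x2-1)/(m1*m2*N1*N2))"
    unfolding Crr_def K1_def K2_def K12_def \<alpha>e \<gamma>e b1s[symmetric] b2s[symmetric] using nzs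
    by (simp add: field_simps power2_eq_square)
  have Crr_v: "Crr = (1/2) * inverse (1 + \<mu>*k) * (-k*(2+\<mu>*k))"
    unfolding Crr_e A(2) c2 E[symmetric] using hmu Enz by (simp add: field_simps)
  have Css_e: "Css = c^2 * ((x2^2-1)/(2*N2)/(m1*m2*N1) + (x1^2-1)/(2*N1)/(m1*m2*N2) - (x1*x2-1)/(m1*m2*N1*N2))"
    unfolding Css_def K1_def K2_def K12_def \<beta>e \<delta>e b1s[symmetric] b2s[symmetric] aa1[symmetric] aa2[symmetric] using nzs
    by (simp add: field_simps power2_eq_square)
  have Css_v: "Css = (1/2) * inverse (1 + \<mu>*k) * k"
    unfolding Css_e A(3) c2 E[symmetric] using hmu Enz by (simp add: field_simps)
  have Crs_e: "Crs = c^2/(a1*a2*b1*b2) * (2*((x2^2-1)/(2*N2))/m2 - 2*((x1^2-1)/(2*N1))/m1 + (x1*x2-1)*(1/(m1*N1)-1/(m2*N2)))"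
    unfolding Crs_def K1_def K2_def K12_def \<alpha>e \<beta>e \<gamma>e \<delta>e b1s[symmetric] b2s[symmetric] using nzs
    by (simp add: field_simps power2_eq_square)
  have md: "m1 - m2 = sD" using m1e m2e by (simp add: field_simps)
  have skp: "sk > 0" unfolding sk_def k_def[symmetric] using kpos by simp
  have s\<mu>p: "s\<mu> > 0" unfolding s\<mu>_def using hmu by simp
  have NN12: "N1*N2 = (Q-1)*(Q*(m1-m2))^2"
  proof -
    have "N1*N2 = -(x1*x2)*(x1-x2)^2" unfolding N1x N2x by (simp add: power2_eq_square algebra_simps)
    also have "\<dots> = (Q-1)*(Q*(m1-m2))^2" unfolding x12 xd md by (simp add: power2_eq_square algebra_simps)
    finally show ?thesis .
  qed
  have Q1nz: "Q - 1 \<noteq> 0" using Q2 by simp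
  have keyarg: "k*(m1*m2*(N1*N2)) = (Q*(m1-m2))^2*\<mu>"
    unfolding NN12 ke muQ using Q1nz by (simp add: field_simps power2_eq_square)
  have QmP: "Q*(m1-m2) > 0" using md sDpos Q2 by simp
  have key: "sk*(a1*a2*b1*b2) = Q*(m1-m2)* s\<mu>"
  proof -
    have "sk*(a1*a2*b1*b2) = sqrt (k*(m1*m2*(N1*N2)))"
      unfolding sk_def k_def[symmetric] a1_def a2_def b1_def b2_def by (simp add: real_sqrt_mult mult_ac)
    also have "\<dots> = sqrt ((Q*(m1-m2))^2) * s\<mu>" unfolding keyarg s\<mu>_def by (simp add: real_sqrt_mult)
    also have "\<dots> = Q*(m1-m2)* s\<mu>" using QmP by simp
    finally show ?thesis .
  qed
  have Pp: "a1*a2*b1*b2 > 0" using a1p a2p b1p b2p by simp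
  have Pe: "a1*a2*b1*b2 = Q*(m1-m2)* s\<mu>/sk" using key skp by (simp add: field_simps)
  have mdnz: "m1 - m2 \<noteq> 0" using md sDpos by simp
  have Crs_v: "Crs = (1/2) * inverse (1 + \<mu>*k) * (2 / s\<mu> * sk)"
  proof -
    have "Crs = c^2/(a1*a2*b1*b2) * (1/m2 - 1/m1)" unfolding Crs_e A(4) ..
    also have "\<dots> = c^2 * sk / (\<mu> * s\<mu>)" unfolding Pe muQ using nzs mdnz skp s\<mu>p Qnz
      by (simp add: field_simps)
    also have "\<dots> = (1/2) * inverse (1 + \<mu>*k) * (2 / s\<mu> * sk)" unfolding c2 E[symmetric] using hmu Enz s\<mu>p
      by (simp add: field_simps)
    finally show ?thesis .
  qed
  have skk: "sqrt k = sk" unfolding sk_def k_def ..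
  have Tpart: "TT q \<mu> u =
           (1/2) * inverse (1 + \<mu> * (real q / (real q - 1))) *
           (- (real q / (real q - 1)) * (2 + \<mu> * (real q / (real q - 1))) * (r \<bullet> r)
            + (real q / (real q - 1)) * (s \<bullet> s)
            + 2 / sqrt \<mu> * sqrt (real q / (real q - 1)) * (r \<bullet> s))"
    unfolding k_def[symmetric] sk_def[symmetric] s\<mu>_def[symmetric] T1 Crr_v Css_v Crs_v
    by (simp add: algebra_simps skk)
  show ?thesis using Gpart Tpart by blast
qed

end
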